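(* Let $X$ be a Banach space as described in the context, let $f\in X$ with Taylor expansion $f(z)=\sum_{k=0}^\infty c_kz^k$ in $\mathbb{D}$. Then for every $n\ge1$, $$|c_n|\,\|z^n\|\le E_n(f)\le \|f\| .$$
   Context: $\mathbb{D}=\{z\in\mathbb{C}:|z|<1\}$. $X$ is a complex Banach space of functions analytic in $\mathbb{D}$ whose norm $\|\cdot\|$ satisfies: (i) $\|f(\cdot\, e^{it})\|=\|f(\cdot)\|$ for all $t\in\mathbb{R}$ and $f\in X$; (ii) $\|f\|<\infty$ for every entire function $f$; (iii) for all $f\in X$ and $g\in L[0,2\pi]$, $\big\|\frac{1}{2\pi}\int_0^{2\pi} f(ze^{it})g(t)\,dt\big\|\le \frac{1}{2\pi}\int_0^{2\pi}|g(t)|\,dt\cdot\|f\|$. For $n\ge 1$, $\mathcal{P}_n$ is the set of complex polynomials of degree at most $n-1$, $E_n(f)=\inf_{p\in\mathcal{P}_n}\|f-p\|$, and $\|z^n\|$ is the norm in $X$ of the monomial $z\mapsto z^n$. *)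

theory Defs
  imports "HOL-Analysis.Analysis"
begin

text \<open>Functions on the unit disc are represented canonically as functions
  complex \<Rightarrow> complex that vanish outside the open unit disc.\<close>

definition restr :: "(complex \<Rightarrow> complex) \<Rightarrow> complex \<Rightarrow> complex" where
  "restr f = (\<lambda>z. if z \<in> ball 0 1 then f z else 0)"

definition rot :: "(complex \<Rightarrow> complex) \<Rightarrow> real \<Rightarrow> complex \<Rightarrow> complex" where
  "rot f t = (\<lambda>z. f (z * exp (\<i> * complex_of_real t)))"

definition conv_op :: "(complex \<Rightarrow> complex) \<Rightarrow> (real \<Rightarrow> complex) \<Rightarrow> complex \<Rightarrow> complex" where
  "conv_op f g = restr (\<lambda>z. (1 / (2 * complex_of_real pi)) *
      (LINT t:{0..2*pi}|lborel. f (z * exp (\<i> * complex_of_real t)) * g t))"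

definition admissible_space :: "(complex \<Rightarrow> complex) set \<Rightarrow> ((complex \<Rightarrow> complex) \<Rightarrow> real) \<Rightarrow> bool" where
  "admissible_space X N \<longleftrightarrow>
     \<comment> \<open>functions analytic in the disc (canonically zero outside)\<close>
     (\<forall>f\<in>X. f analytic_on ball 0 1 \<and> restr f = f) \<and>
     \<comment> \<open>complex vector space\<close>
     (\<lambda>z. 0) \<in> X \<and>
     (\<forall>f\<in>X. \<forall>g\<in>X. (\<lambda>z. f z + g z) \<in> X) \<and>
     (\<forall>f\<in>X. \<forall>c. (\<lambda>z. c * f z) \<in> X) \<and>
     \<comment> \<open>norm\<close>
     (\<forall>f\<in>X. N f \<ge> 0 \<and> (N f = 0 \<longleftrightarrow> f = (\<lambda>z. 0))) \<and>
     (\<forall>f\<in>X. \<forall>c. N (\<lambda>z. c * f z) = cmod c * N f) \<and>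
     (\<forall>f\<in>X. \<forall>g\<in>X. N (\<lambda>z. f z + g z) \<le> N f + N g) \<and>
     \<comment> \<open>completeness\<close>
     (\<forall>F. (\<forall>k. F k \<in> X) \<longrightarrow>
        (\<forall>e>0. \<exists>M. \<forall>m\<ge>M. \<forall>k\<ge>M. N (\<lambda>z. F m z - F k z) < e) \<longrightarrow>
        (\<exists>h\<in>X. (\<lambda>k. N (\<lambda>z. F k z - h z)) \<longlonglongrightarrow> 0)) \<and>
     \<comment> \<open>(i) rotation invariance\<close>
     (\<forall>f\<in>X. \<forall>t. rot f t \<in> X \<and> N (rot f t) = N f) \<and>
     \<comment> \<open>(ii) entire functions belong to X (finite norm)\<close>
     (\<forall>f. f holomorphic_on UNIV \<longrightarrow> restr f \<in> X) \<and>
     \<comment> \<open>(iii)\<close>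
     (\<forall>f\<in>X. \<forall>g. set_integrable lborel {0..2*pi} g \<longrightarrow>
        conv_op f g \<in> X \<and>
        N (conv_op f g) \<le> (1 / (2 * pi)) * (LINT t:{0..2*pi}|lborel. cmod (g t)) * N f)"

definition best_approx :: "((complex \<Rightarrow> complex) \<Rightarrow> real) \<Rightarrow> nat \<Rightarrow> (complex \<Rightarrow> complex) \<Rightarrow> real" where
  "best_approx N n f = Inf {N (\<lambda>z. f z - restr (\<lambda>w. \<Sum>k<n. a k * w ^ k) z) | a. True}"

end

theory Submission
  imports Defs
begin

lemma exp_int_integral:
  fixes m :: int
  assumes "m \<noteq> 0"
  shows "(LINT t:{0..2*pi}|lborel. exp (\<i> * of_int m * complex_of_real t)) = 0"
proof -
  let ?G = "\<lambda>w::complex. exp (\<i> * of_int m * w) / (\<i> * of_int m)"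
  let ?F = "\<lambda>t::real. ?G (complex_of_real t)"
  have d: "(?F has_vector_derivative exp (\<i> * of_int m * complex_of_real t)) (at t within A)" for t A
  proof -
    have "(?G has_field_derivative
        exp (\<i> * of_int m * complex_of_real t) * (\<i> * of_int m) / (\<i> * of_int m)) (at (complex_of_real t))"
      by (auto intro!: derivative_eq_intros)
    then have "(?G has_field_derivative
        exp (\<i> * of_int m * complex_of_real t)) (at (complex_of_real t))"
      using assms by simp
    from has_vector_derivative_real_field[OF this] show ?thesis .
  qed
  have e: "(LBINT t=ereal 0..ereal (2*pi). exp (\<i> * of_int m * complex_of_real t)) =
        (LINT t:{0..2*pi}|lborel. exp (\<i> * of_int m * complex_of_real t))"
    by (rule interval_integral_Icc) simp
  have "(LINT t:{0..2*pi}|lborel. exp (\<i> * of_int m * complex_of_real t)) =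
        (LBINT t=ereal 0..ereal (2*pi). exp (\<i> * of_int m * complex_of_real t))"
    using e by simp
  also have "\<dots> = ?F (2*pi) - ?F 0"
    by (rule interval_integral_FTC_finite) (auto intro!: continuous_intros d)
  also have "exp (\<i> * of_int m * complex_of_real (2*pi)) = 1"
    using exp_integer_2pi[of "of_int m"] by (simp add: algebra_simps)
  finally show ?thesis by simp
qed

lemma coeff_integral:
  fixes h :: "complex \<Rightarrow> complex" and d :: "nat \<Rightarrow> complex" and n :: nat and z :: complex
  assumes hs: "\<forall>w\<in>ball 0 1. (\<lambda>k. d k * w ^ k) sums h w" and z: "z \<in> ball 0 1"
  shows "(LINT t:{0..2*pi}|lborel. h (z * exp (\<i> * complex_of_real t)) *
            exp (\<i> * of_int (- int n) * complex_of_real t)) = 2 * pi * d n * z ^ n"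
proof -
  define S :: "real set" where "S = {0..2*pi}"
  define T where "T k t = d k * z ^ k * exp (\<i> * of_int (int k - int n) * complex_of_real t)" for k t
  define g where "g t = exp (\<i> * of_int (- int n) * complex_of_real t)" for t
  have r: "cmod z < 1" using z by simp
  define s where "s = (1 + cmod z) / 2"
  have s0: "0 \<le> s" "s < 1" "cmod z < s" using r norm_ge_zero[of z] by (auto simp: s_def)
  have s1: "complex_of_real s \<in> ball 0 1" using s0 by (simp only: mem_ball dist_0_norm norm_minus_commute norm_of_real)
  have "summable (\<lambda>k. d k * complex_of_real s ^ k)"
    using hs s1 sums_summable by blast
  then have summ: "summable (\<lambda>k. norm (d k * z ^ k))"
    by (rule powser_insidea) (use s0 in simp)
  have nexp: "norm (exp (\<i> * complex_of_real a)) = 1" for a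
    by (simp add: norm_exp_eq_Re)
  have Tn: "norm (T k t) = norm (d k * z ^ k)" for k t
  proof -
    have "exp (\<i> * of_int (int k - int n) * complex_of_real t) = exp (\<i> * complex_of_real (of_int (int k - int n) * t))"
      by (simp add: mult.assoc)
    then show ?thesis unfolding T_def by (simp only: norm_mult nexp)
  qed
  have pt: "(\<lambda>k. T k t) sums (h (z * exp (\<i> * complex_of_real t)) * g t)" for t
  proof -
    have w: "z * exp (\<i> * complex_of_real t) \<in> ball 0 1"
      using r by (simp add: norm_mult nexp)
    have "(\<lambda>k. d k * (z * exp (\<i> * complex_of_real t)) ^ k * g t) sums (h (z * exp (\<i> * complex_of_real t)) * g t)"
      using hs w by (intro sums_mult2) auto
    moreover have "d k * (z * exp (\<i> * complex_of_real t)) ^ k * g t = T k t" for k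
    proof -
      have "exp (\<i> * complex_of_real t) ^ k * g t = exp (of_nat k * (\<i> * complex_of_real t) + \<i> * of_int (- int n) * complex_of_real t)"
        by (simp only: g_def exp_add exp_of_nat_mult)
      also have "\<dots> = exp (\<i> * of_int (int k - int n) * complex_of_real t)"
        by (simp add: algebra_simps)
      finally show ?thesis unfolding T_def by (simp add: power_mult_distrib mult.assoc)
    qed
    ultimately show ?thesis by simp
  qed
  define f where "f k t = indicator S t *\<^sub>R T k t" for k t
  have int: "integrable lborel (f k)" for k
    unfolding f_def S_def T_def by (rule borel_integrable_compact) (auto intro!: continuous_intros)
  have fn: "norm (f k t) = indicator S t *\<^sub>R norm (d k * z ^ k)" for k t
    by (simp add: f_def Tn indicator_def)
  have mS: "measure lborel S = 2 * pi" by (simp add: S_def)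
  have intn: "(\<integral>t. norm (f k t) \<partial>lborel) = 2 * pi * norm (d k * z ^ k)" for k
  proof -
    have "(\<integral>t. norm (f k t) \<partial>lborel) = (LINT t:S|lborel. norm (d k * z ^ k))"
      by (simp add: fn set_lebesgue_integral_def)
    also have "\<dots> = measure lborel S *\<^sub>R norm (d k * z ^ k)"
      by (rule set_integral_const) (auto simp: S_def)
    finally show ?thesis by (simp add: mS)
  qed
  have A: "AE t in lborel. summable (\<lambda>k. norm (f k t))"
    by (simp add: fn summable_mult summ)
  have B: "summable (\<lambda>k. \<integral>t. norm (f k t) \<partial>lborel)"
    by (simp add: intn summable_mult summ)
  have If: "integral\<^sup>L lborel (f k) = (if k = n then 2 * pi * d n * z ^ n else 0)" for k
  proof -
    have "integral\<^sup>L lborel (f k) = (LINT t:S|lborel. T k t)"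
      by (simp add: f_def[abs_def] set_lebesgue_integral_def)
    also have "\<dots> = d k * z ^ k * (LINT t:S|lborel. exp (\<i> * of_int (int k - int n) * complex_of_real t))"
      unfolding T_def by (rule set_integral_mult_right)
    also have "\<dots> = (if k = n then 2 * pi * d n * z ^ n else 0)"
    proof (cases "k = n")
      case True
      have "(LINT t:S|lborel. (1::complex)) = measure lborel S *\<^sub>R 1"
        by (rule set_integral_const) (auto simp: S_def)
      then show ?thesis using True by (simp add: mS scaleR_conv_of_real)
    next
      case False
      then have "int k - int n \<noteq> 0" by simp
      from exp_int_integral[OF this] False show ?thesis by (simp add: S_def)
    qed
    finally show ?thesis .
  qed
  have "(LINT t:{0..2*pi}|lborel. h (z * exp (\<i> * complex_of_real t)) *
            exp (\<i> * of_int (- int n) * complex_of_real t)) = (\<integral>t. (\<Sum>k. f k t) \<partial>lborel)"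
    unfolding set_lebesgue_integral_def S_def[symmetric]
  proof (rule Bochner_Integration.integral_cong[OF refl])
    fix t
    show "indicator S t *\<^sub>R (h (z * exp (\<i> * complex_of_real t)) * exp (\<i> * of_int (- int n) * complex_of_real t)) = (\<Sum>k. f k t)"
      using sums_unique[OF pt[of t]] by (simp add: f_def g_def indicator_def)
  qed
  also have "\<dots> = (\<Sum>k. integral\<^sup>L lborel (f k))"
    by (rule integral_suminf[OF int A B])
  also have "\<dots> = 2 * pi * d n * z ^ n"
    unfolding If using sums_single[of n "\<lambda>_. 2 * pi * d n * z ^ n"] sums_unique by (metis (no_types))
  finally show ?thesis .
qed

lemma lower_bound:
  fixes X :: "(complex \<Rightarrow> complex) set" and N :: "(complex \<Rightarrow> complex) \<Rightarrow> real"
    and f :: "complex \<Rightarrow> complex" and c :: "nat \<Rightarrow> complex" and n :: nat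
  assumes adm: "admissible_space X N"
    and fX: "f \<in> X"
    and fs: "\<forall>z\<in>ball 0 1. (\<lambda>k. c k * z ^ k) sums f z"
  shows "(\<lambda>z. f z - restr (\<lambda>w. \<Sum>k<n. a k * w ^ k) z) \<in> X \<and>
         cmod (c n) * N (restr (\<lambda>z. z ^ n)) \<le> N (\<lambda>z. f z - restr (\<lambda>w. \<Sum>k<n. a k * w ^ k) z)"
proof -
  note A = adm[unfolded admissible_space_def]
  have Aadd: "\<forall>f\<in>X. \<forall>g\<in>X. (\<lambda>z. f z + g z) \<in> X" using A by (elim conjE) assumption
  have Asc: "\<forall>f\<in>X. \<forall>c. (\<lambda>z. c * f z) \<in> X" using A by (elim conjE) assumption
  have Ahom: "\<forall>f\<in>X. \<forall>c. N (\<lambda>z. c * f z) = cmod c * N f" using A by (elim conjE) assumption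
  have Aent: "\<forall>f. f holomorphic_on UNIV \<longrightarrow> restr f \<in> X" using A by (elim conjE) assumption
  have Aconv: "\<forall>f\<in>X. \<forall>g. set_integrable lborel {0..2*pi} g \<longrightarrow>
        conv_op f g \<in> X \<and>
        N (conv_op f g) \<le> (1 / (2 * pi)) * (LINT t:{0..2*pi}|lborel. cmod (g t)) * N f"
    using A by (elim conjE) assumption
  define p where "p = restr (\<lambda>w. \<Sum>k<n. a k * w ^ k)"
  define h where "h = (\<lambda>z. f z - p z)"
  have "(\<lambda>w. \<Sum>k<n. a k * w ^ k) holomorphic_on UNIV" by (intro holomorphic_intros)
  then have pX: "p \<in> X" unfolding p_def using Aent by blast
  have "(\<lambda>z. (-1) * p z) \<in> X" using Asc pX by blast
  from Aadd[rule_format, OF fX this] have "(\<lambda>z. f z + (-1) * p z) \<in> X" .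
  then have hX: "h \<in> X" unfolding h_def by simp
  define d where "d k = c k - (if k < n then a k else 0)" for k
  have hs: "\<forall>w\<in>ball 0 1. (\<lambda>k. d k * w ^ k) sums h w"
  proof
    fix w :: complex assume w: "w \<in> ball 0 1"
    have "(\<lambda>k. if k \<in> {..<n} then a k * w ^ k else 0) sums (\<Sum>k\<in>{..<n}. a k * w ^ k)"
      by (rule sums_If_finite_set) simp
    moreover have "(\<lambda>k. if k \<in> {..<n} then a k * w ^ k else 0) = (\<lambda>k. (if k < n then a k else 0) * w ^ k)"
      by auto
    ultimately have "(\<lambda>k. (if k < n then a k else 0) * w ^ k) sums p w"
      using w by (simp add: p_def restr_def)
    from sums_diff[OF fs[rule_format, OF w] this] show "(\<lambda>k. d k * w ^ k) sums h w"
      by (simp add: d_def h_def algebra_simps)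
  qed
  define g where "g t = exp (\<i> * of_int (- int n) * complex_of_real t)" for t
  have gi: "set_integrable lborel {0..2*pi} g"
    unfolding set_integrable_def g_def by (rule borel_integrable_compact) (auto intro!: continuous_intros)
  have gn: "cmod (g t) = 1" for t
  proof -
    have "g t = exp (\<i> * complex_of_real (of_int (- int n) * t))" by (simp add: g_def mult.assoc)
    then show ?thesis by (simp add: norm_exp_eq_Re)
  qed
  have gint: "(LINT t:{0..2*pi}|lborel. cmod (g t)) = 2 * pi"
  proof -
    have "(LINT t:{0..2*pi}|lborel. cmod (g t)) = (LINT t:{0..2*pi}|lborel. (1::real))"
      by (simp add: gn)
    also have "\<dots> = measure lborel {0..2*pi} *\<^sub>R 1"
      by (rule set_integral_const) auto
    finally show ?thesis by simp
  qed
  from Aconv[rule_format, OF hX gi] have cX: "conv_op h g \<in> X"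
    and cN: "N (conv_op h g) \<le> (1 / (2 * pi)) * (LINT t:{0..2*pi}|lborel. cmod (g t)) * N h"
    by blast+
  have ceq: "conv_op h g = (\<lambda>z. c n * restr (\<lambda>z. z ^ n) z)"
  proof
    fix z
    show "conv_op h g z = c n * restr (\<lambda>z. z ^ n) z"
    proof (cases "z \<in> ball 0 1")
      case True
      have "(LINT t:{0..2*pi}|lborel. h (z * exp (\<i> * complex_of_real t)) * g t) = 2 * pi * d n * z ^ n"
        unfolding g_def by (rule coeff_integral[OF hs True])
      then show ?thesis using True by (simp add: conv_op_def restr_def d_def)
    next
      case False
      then show ?thesis by (simp add: conv_op_def restr_def)
    qed
  qed
  have "(\<lambda>z. z ^ n) holomorphic_on UNIV" by (intro holomorphic_intros)
  then have zX: "restr (\<lambda>z. z ^ n) \<in> X" using Aent by blast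
  have "N (conv_op h g) = cmod (c n) * N (restr (\<lambda>z. z ^ n))"
    unfolding ceq using Ahom zX by blast
  moreover have "N (conv_op h g) \<le> N h" using cN gint by simp
  ultimately show ?thesis using hX unfolding h_def p_def by simp
qed

theorem lemma4p1:
  fixes X :: "(complex \<Rightarrow> complex) set" and N :: "(complex \<Rightarrow> complex) \<Rightarrow> real"
    and f :: "complex \<Rightarrow> complex" and c :: "nat \<Rightarrow> complex" and n :: nat
  assumes "admissible_space X N"
    and "f \<in> X"
    and "\<forall>z\<in>ball 0 1. (\<lambda>k. c k * z ^ k) sums f z"
    and "n \<ge> 1"
  shows "cmod (c n) * N (restr (\<lambda>z. z ^ n)) \<le> best_approx N n f \<and> best_approx N n f \<le> N f"
proof -
  note A = assms(1)[unfolded admissible_space_def]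
  let ?S = "{N (\<lambda>z. f z - restr (\<lambda>w. \<Sum>k<n. a k * w ^ k) z) | a. True}"
  have lb: "\<And>x. x \<in> ?S \<Longrightarrow> cmod (c n) * N (restr (\<lambda>z. z ^ n)) \<le> x"
    using lower_bound[OF assms(1-3)] by blast
  have ne: "?S \<noteq> {}" by blast
  have bdd: "bdd_below ?S" using lb by (rule bdd_belowI)
  have fin: "N f \<in> ?S"
  proof -
    have "(\<lambda>z. f z - restr (\<lambda>w. \<Sum>k<n. (\<lambda>_. 0) k * w ^ k) z) = f"
      by (simp add: restr_def)
    then have "N f = N (\<lambda>z. f z - restr (\<lambda>w. \<Sum>k<n. (\<lambda>_. 0) k * w ^ k) z)" by simp
    then show ?thesis unfolding mem_Collect_eq by (intro exI[where x="\<lambda>_. 0"]) simp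
  qed
  show ?thesis unfolding best_approx_def
    using cInf_greatest[OF ne lb] cInf_lower[OF fin bdd] by blast
qed
end
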